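(* Let $j\in\mathbb{N}$ and $r\in\mathbb{N}_0$. Then for all $n\in\mathbb{N}$, \[c_j^{(r)}(n)=\sum_{i=0}^{j}(-1)^{j-i}\binom{j}{i} d_{i+r}(n).\]
   Context: $\mathbb{N}=\{1,2,\dots\}$, $\mathbb{N}_0=\mathbb{N}\cup\{0\}$. For $j,n\in\mathbb{N}$, $d_j(n)$ is the number of ordered $j$-tuples of positive integers with product $n$; $d_0(n)=1$ if $n=1$, $d_0(n)=0$ otherwise. $c_j(n)$ is the number of ordered $j$-tuples of integers each $\ge 2$ with product $n$. The associated divisor functions are defined recursively by $c_j^{(0)}=c_j$ and $c_j^{(r)}(n)=\sum_{m\mid n}c_j^{(r-1)}(m)$ for $r,n\in\mathbb{N}$. *)

theory Defs
  imports Main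
begin

text \<open>d j n: number of ordered j-tuples of positive integers with product n
  (for j = 0 this is 1 iff n = 1, as the empty product is 1).\<close>
definition divisor_d :: "nat \<Rightarrow> nat \<Rightarrow> nat" where
  "divisor_d j n = card {xs :: nat list. length xs = j \<and> (\<forall>x\<in>set xs. x \<ge> 1) \<and> prod_list xs = n}"

definition divisor_c :: "nat \<Rightarrow> nat \<Rightarrow> nat" where
  "divisor_c j n = card {xs :: nat list. length xs = j \<and> (\<forall>x\<in>set xs. x \<ge> 2) \<and> prod_list xs = n}"

fun assoc_c :: "nat \<Rightarrow> nat \<Rightarrow> nat \<Rightarrow> nat" where
  "assoc_c j 0 n = divisor_c j n"
| "assoc_c j (Suc r) n = (\<Sum>m | m dvd n. assoc_c j r m)"

end

theory Submission
  imports Defs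
begin

definition Lset :: "(nat \<Rightarrow> bool) \<Rightarrow> nat \<Rightarrow> nat \<Rightarrow> nat list set" where
  "Lset P k n = {xs. length xs = k \<and> (\<forall>x\<in>set xs. P x) \<and> prod_list xs = n}"

lemma dvd_prod_list_mem: "x \<in> set xs \<Longrightarrow> (x::nat) dvd prod_list xs"
  by (induction xs) auto

lemma Lset_finite:
  assumes "m \<ge> 1" shows "finite (Lset P k m)"
proof -
  have "Lset P k m \<subseteq> {xs. set xs \<subseteq> {..m} \<and> length xs = k}"
  proof
    fix xs assume "xs \<in> Lset P k m"
    then have "length xs = k" "prod_list xs = m" by (auto simp: Lset_def)
    moreover have "x \<le> m" if "x \<in> set xs" for x
      using dvd_prod_list_mem[OF that] assms \<open>prod_list xs = m\<close>
      by (simp add: dvd_imp_le)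
    ultimately show "xs \<in> {xs. set xs \<subseteq> {..m} \<and> length xs = k}" by auto
  qed
  moreover have "finite {xs. set xs \<subseteq> {..m::nat} \<and> length xs = k}"
    by (rule finite_lists_length_eq) simp
  ultimately show ?thesis by (rule finite_subset)
qed

lemma Lset_Suc:
  assumes n: "n \<ge> 1"
  shows "card (Lset P (Suc k) n) = (\<Sum>m | m dvd n \<and> P (n div m). card (Lset P k m))"
proof -
  let ?I = "{m. m dvd n \<and> P (n div m)}"
  have eq: "Lset P (Suc k) n = (\<Union>m\<in>?I. (\<lambda>xs. (n div m) # xs) ` Lset P k m)"
  proof (rule set_eqI, rule iffI)
    fix xs assume xs: "xs \<in> Lset P (Suc k) n"
    then obtain x ys where xs_eq: "xs = x # ys" by (cases xs) (auto simp: Lset_def)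
    from xs xs_eq have px: "P x" and ly: "length ys = k" and py: "\<forall>y\<in>set ys. P y"
      and pr: "x * prod_list ys = n" by (auto simp: Lset_def)
    have pos: "prod_list ys > 0" using pr n by (cases "prod_list ys") auto
    have "n div prod_list ys = x" using pr pos by (metis nonzero_mult_div_cancel_right less_not_refl)
    then have "prod_list ys \<in> ?I" using px pr by (auto intro: dvdI[of _ _ x] simp: mult.commute)
    moreover have "xs \<in> (\<lambda>xs. (n div prod_list ys) # xs) ` Lset P k (prod_list ys)"
      using ly py xs_eq \<open>n div prod_list ys = x\<close> by (auto simp: Lset_def)
    ultimately show "xs \<in> (\<Union>m\<in>?I. (\<lambda>xs. (n div m) # xs) ` Lset P k m)"
      by blast
  next
    fix xs assume "xs \<in> (\<Union>m\<in>?I. (\<lambda>xs. (n div m) # xs) ` Lset P k m)"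
    then obtain m ys where m: "m dvd n" "P (n div m)" and ys: "ys \<in> Lset P k m"
      and xs: "xs = (n div m) # ys" by auto
    then show "xs \<in> Lset P (Suc k) n"
      by (auto simp: Lset_def)
  qed
  have fin: "finite ?I"
    by (rule finite_subset[of _ "{m. m dvd n}"]) (use n in \<open>auto intro: finite_divisors_nat\<close>)
  have "card (Lset P (Suc k) n) = (\<Sum>m\<in>?I. card ((\<lambda>xs. (n div m) # xs) ` Lset P k m))"
    unfolding eq
  proof (rule card_UN_disjoint[OF fin])
    show "\<forall>m\<in>?I. finite ((\<lambda>xs. (n div m) # xs) ` Lset P k m)"
    proof
      fix m assume "m \<in> ?I"
      then have "m \<ge> 1" using n by (metis One_nat_def dvd_0_left_iff mem_Collect_eq not_less_eq_eq le_0_eq not_one_le_zero Suc_leI neq0_conv)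
      then show "finite ((\<lambda>xs. (n div m) # xs) ` Lset P k m)" by (simp add: Lset_finite)
    qed
    show "\<forall>m1\<in>?I. \<forall>m2\<in>?I. m1 \<noteq> m2 \<longrightarrow>
      ((\<lambda>xs. (n div m1) # xs) ` Lset P k m1) \<inter> ((\<lambda>xs. (n div m2) # xs) ` Lset P k m2) = {}"
      by (auto simp: Lset_def)
  qed
  also have "\<dots> = (\<Sum>m\<in>?I. card (Lset P k m))"
    by (rule sum.cong) (auto intro: card_image inj_onI)
  finally show ?thesis .
qed


lemma d_Lset: "divisor_d k n = card (Lset (\<lambda>x. x \<ge> 1) k n)"
  by (simp add: divisor_d_def Lset_def)

lemma c_Lset: "divisor_c k n = card (Lset (\<lambda>x. x \<ge> 2) k n)"
  by (simp add: divisor_c_def Lset_def)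

lemma fin_div: "(n::nat) \<ge> 1 \<Longrightarrow> finite {m. m dvd n}"
  by (rule finite_divisors_nat) simp

lemma d_Suc:
  assumes n: "n \<ge> 1"
  shows "divisor_d (Suc k) n = (\<Sum>m | m dvd n. divisor_d k m)"
proof -
  have "{m. m dvd n \<and> 1 \<le> n div m} = {m. m dvd n}"
    using n by (auto elim!: dvdE)
  then show ?thesis unfolding d_Lset using Lset_Suc[OF n, of "\<lambda>x. x \<ge> 1" k] by simp
qed

lemma c_Suc:
  assumes n: "n \<ge> 1"
  shows "divisor_c (Suc k) n + divisor_c k n = (\<Sum>m | m dvd n. divisor_c k m)"
proof -
  have "{m. m dvd n \<and> 2 \<le> n div m} = {m. m dvd n} - {n}"
  proof (rule set_eqI, rule iffI)
    fix m assume "m \<in> {m. m dvd n \<and> 2 \<le> n div m}"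
    then show "m \<in> {m. m dvd n} - {n}" using n by auto
  next
    fix m assume m: "m \<in> {m. m dvd n} - {n}"
    then obtain q where q: "n = m * q" by (auto elim!: dvdE)
    have "m > 0" using q n by (cases m) auto
    have "q \<noteq> 0" using q n by auto
    moreover have "q \<noteq> 1" using q m by auto
    ultimately have "q \<ge> 2" by linarith
    moreover have "n div m = q" using q \<open>m > 0\<close> by simp
    ultimately show "m \<in> {m. m dvd n \<and> 2 \<le> n div m}" using m by auto
  qed
  moreover have "(\<Sum>m | m dvd n. divisor_c k m) = divisor_c k n + (\<Sum>m\<in>{m. m dvd n} - {n}. divisor_c k m)"
    by (rule sum.remove) (use n fin_div in auto)
  ultimately show ?thesis unfolding c_Lset using Lset_Suc[OF n, of "\<lambda>x. x \<ge> 2" k] by simp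
qed

lemma cd0: "divisor_c 0 n = divisor_d 0 n"
  unfolding divisor_c_def divisor_d_def by (rule arg_cong[where f=card]) auto

lemma dvd_ge1: "(n::nat) \<ge> 1 \<Longrightarrow> m dvd n \<Longrightarrow> m \<ge> 1"
  by (cases m) auto

lemma G0: "n \<ge> 1 \<Longrightarrow> assoc_c 0 r n = divisor_d r n"
proof (induction r arbitrary: n)
  case 0 then show ?case by (simp add: cd0)
next
  case (Suc r)
  have "assoc_c 0 (Suc r) n = (\<Sum>m | m dvd n. divisor_d r m)"
    using Suc by (auto intro!: sum.cong dest: dvd_ge1)
  then show ?case using d_Suc[OF Suc.prems] by simp
qed

lemma Grec: "n \<ge> 1 \<Longrightarrow> assoc_c (Suc j) r n + assoc_c j r n = assoc_c j (Suc r) n"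
proof (induction r arbitrary: n)
  case 0 then show ?case using c_Suc[OF 0] by simp
next
  case (Suc r)
  have "assoc_c (Suc j) (Suc r) n + assoc_c j (Suc r) n
      = (\<Sum>m | m dvd n. assoc_c (Suc j) r m + assoc_c j r m)"
    by (simp add: sum.distrib)
  also have "\<dots> = (\<Sum>m | m dvd n. assoc_c j (Suc r) m)"
    using Suc by (auto intro!: sum.cong dest: dvd_ge1)
  finally show ?case by simp
qed

lemma binom_diff:
  fixes f :: "nat \<Rightarrow> int"
  shows "(\<Sum>i = 0..Suc j. (-1) ^ (Suc j - i) * int (Suc j choose i) * f i)
       = (\<Sum>i = 0..j. (-1) ^ (j - i) * int (j choose i) * f (Suc i))
       - (\<Sum>i = 0..j. (-1) ^ (j - i) * int (j choose i) * f i)"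
proof -
  have split: "int (Suc j choose i) = int (j choose i) + (if i = 0 then 0 else int (j choose (i - 1)))" for i
    by (cases i) auto
  have "(\<Sum>i = 0..Suc j. (-1) ^ (Suc j - i) * int (Suc j choose i) * f i)
      = (\<Sum>i = 0..Suc j. (-1) ^ (Suc j - i) * int (j choose i) * f i)
      + (\<Sum>i = 0..Suc j. (-1) ^ (Suc j - i) * (if i = 0 then 0 else int (j choose (i - 1))) * f i)"
    unfolding split by (simp add: algebra_simps sum.distrib)
  also have "(\<Sum>i = 0..Suc j. (-1) ^ (Suc j - i) * int (j choose i) * f i)
      = - (\<Sum>i = 0..j. (-1) ^ (j - i) * int (j choose i) * f i)"
    by (auto simp add: sum.atLeast0_atMost_Suc sum_negf[symmetric] Suc_diff_le intro!: sum.cong)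
  also have "(\<Sum>i = 0..Suc j. (-1) ^ (Suc j - i) * (if i = 0 then 0 else int (j choose (i - 1))) * f i)
      = (\<Sum>i = 0..j. (-1) ^ (j - i) * int (j choose i) * f (Suc i))"
  proof -
    have "(\<Sum>i = 0..Suc j. (-1) ^ (Suc j - i) * (if i = 0 then 0 else int (j choose (i - 1))) * f i)
        = (\<Sum>i = Suc 0..Suc j. (-1) ^ (Suc j - i) * (if i = 0 then 0 else int (j choose (i - 1))) * f i)"
      by (simp add: sum.atLeast_Suc_atMost)
    also have "\<dots> = (\<Sum>i = 0..j. (-1) ^ (Suc j - Suc i) * (if Suc i = 0 then 0 else int (j choose (Suc i - 1))) * f (Suc i))"
      by (rule sum.shift_bounds_cl_Suc_ivl)
    also have "\<dots> = (\<Sum>i = 0..j. (-1) ^ (j - i) * int (j choose i) * f (Suc i))"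
      by simp
    finally show ?thesis .
  qed
  finally show ?thesis by simp
qed

definition F :: "nat \<Rightarrow> nat \<Rightarrow> nat \<Rightarrow> int" where
  "F j r n = (\<Sum>i = 0..j. (-1) ^ (j - i) * int (j choose i) * int (divisor_d (i + r) n))"

lemma main: "n \<ge> 1 \<Longrightarrow> int (assoc_c j r n) = F j r n"
proof (induction j arbitrary: r n)
  case 0 then show ?case by (simp add: F_def G0)
next
  case (Suc j)
  have "F (Suc j) r n = F j (Suc r) n - F j r n"
    unfolding F_def using binom_diff[of j "\<lambda>i. int (divisor_d (i + r) n)"] by simp
  also have "\<dots> = int (assoc_c j (Suc r) n) - int (assoc_c j r n)"
    by (simp only: Suc.IH[OF Suc.prems])
  also have "\<dots> = int (assoc_c (Suc j) r n)"
    using Grec[OF Suc.prems, of j r] by linarith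
  finally show ?case by simp
qed

theorem lemma11:
  fixes j r n :: nat
  assumes "j \<ge> 1" and "n \<ge> 1"
  shows "int (assoc_c j r n) =
    (\<Sum>i = 0..j. (-1) ^ (j - i) * int (j choose i) * int (divisor_d (i + r) n))"
  using main[OF assms(2)] by (simp add: F_def)

end
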